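(* Let $A$ be a synaptic algebra, $p,q\in P$, $r:=(p\vee q)\wedge(p\vee q^{\perp})\wedge(p^{\perp}\vee q)\wedge(p^{\perp}\vee q^{\perp})$, $r_p:=p\wedge(p^{\perp}\vee q)\wedge(p^{\perp}\vee q^{\perp})$ and $r_q:=q\wedge(p\vee q^{\perp})\wedge(p^{\perp}\vee q^{\perp})$. Then $r_p=pr=rp=r\wedge p$ and $r_q=qr=rq=r\wedge q$ belong to $P[0,r]$, and $r_p$ and $r_q$ are in generic position in the synaptic algebra $rAr$; that is, $r_p\wedge r_q=r_p\wedge(r-r_q)=(r-r_p)\wedge r_q=(r-r_p)\wedge(r-r_q)=0$.
   Context: Synaptic algebra (Foulis): $R$ is a real linear associative algebra with unit $1$, and $A\subseteq R$ is a real linear subspace with $1\in A$. For $a,b\in A$ write $aCb$ iff $ab=ba$; $C(a):=\{b\in A: aCb\}$; $CC(a):=\{b\in A: bCd \text{ for all } d\in C(a)\}$. $A$ is a synaptic algebra with enveloping algebra $R$ iff: (SA1) $A$ is a partially ordered archimedean real linear space with positive cone $A^+$, $1$ is an order unit, $\|\cdot\|$ the order-unit norm; (SA2) $a\in A\Rightarrow a^2\in A^+$; (SA3) $a,b\in A^+\Rightarrow aba\in A^+$; (SA4) if $a\in A$, $b\in A^+$, $aba=0$ then $ab=ba=0$; (SA5) if $a\in A^+$ there is $b\in A^+\cap CC(a)$ with $b^2=a$; (SA6) for $a\in A$ there is $p=p^2\in A$ with $ab=0\Leftrightarrow pb=0$ for all $b\in A$; (SA7) if $1\le a$ there is $b\in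 A$ with $ab=ba=1$; (SA8) if $a,b\in A$, $a_1\le a_2\le\cdots$ are pairwise commuting elements of $C(b)$ with $\|a-a_n\|\to0$, then $a\in C(b)$. $A$ is nondegenerate. $P:=\{p\in A:p=p^2\}$ with the inherited order is an orthomodular lattice with $p^{\perp}:=1-p$, meet $\wedge$, join $\vee$. For $r\in P$, $rAr:=\{rar:a\in A\}=\{b\in A:b=br=rb\}$ is a synaptic algebra with unit $r$ (enveloping algebra $rRr$), whose projection lattice is $P[0,r]:=\{x\in P:x\le r\}$ with orthocomplement $x\mapsto r-x=x^{\perp}\wedge r$. Two projections $x,y$ of a synaptic algebra are in generic position iff $x\wedge y=x\wedge y'=x'\wedge y=x'\wedge y'=0$, where $'$ is the orthocomplement of that algebra. *)

theory Defs
  imports Main "HOL.Real_Vector_Spaces"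
begin

text \<open>The enveloping algebra R is the type 'a, a real
  linear associative algebra with unit (class real_algebra_1). A synaptic algebra is
  given by a carrier A (a real linear subspace of R containing 1) together with its
  positive cone Pos = A^+.\<close>

definition sa_le :: "'a::real_algebra_1 set \<Rightarrow> 'a \<Rightarrow> 'a \<Rightarrow> bool" where
  "sa_le Pos a b \<longleftrightarrow> b - a \<in> Pos"

definition order_unit_norm :: "'a::real_algebra_1 set \<Rightarrow> 'a \<Rightarrow> real" where
  "order_unit_norm Pos a =
     Inf {l::real. 0 < l \<and> sa_le Pos (- (l *\<^sub>R 1)) a \<and> sa_le Pos a (l *\<^sub>R 1)}"

definition commutant :: "'a::real_algebra_1 set \<Rightarrow> 'a \<Rightarrow> 'a set" where
  "commutant A a = {b \<in> A. a * b = b * a}"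

definition bicommutant :: "'a::real_algebra_1 set \<Rightarrow> 'a \<Rightarrow> 'a set" where
  "bicommutant A a = {b \<in> A. \<forall>d \<in> commutant A a. b * d = d * b}"

definition synaptic_algebra :: "'a::real_algebra_1 set \<Rightarrow> 'a set \<Rightarrow> bool" where
  "synaptic_algebra A Pos \<longleftrightarrow>
     \<comment> \<open>A is a real linear subspace of R containing 1\<close>
     (0 \<in> A \<and> 1 \<in> A \<and> (\<forall>a\<in>A. \<forall>b\<in>A. a + b \<in> A) \<and> (\<forall>c::real. \<forall>a\<in>A. c *\<^sub>R a \<in> A)) \<and>
     \<comment> \<open>SA1: partially ordered archimedean real linear space with positive cone Pos, 1 an order unit\<close>
     Pos \<subseteq> A \<and>
     (\<forall>a\<in>Pos. \<forall>b\<in>Pos. a + b \<in> Pos) \<and>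
     (\<forall>c::real. \<forall>a\<in>Pos. 0 \<le> c \<longrightarrow> c *\<^sub>R a \<in> Pos) \<and>
     (\<forall>a\<in>Pos. - a \<in> Pos \<longrightarrow> a = 0) \<and>
     (\<forall>a\<in>A. \<forall>b\<in>A. (\<forall>n::nat. sa_le Pos (of_nat n *\<^sub>R a) b) \<longrightarrow> sa_le Pos a 0) \<and>
     (\<forall>a\<in>A. \<exists>l::real. 0 < l \<and> sa_le Pos (- (l *\<^sub>R 1)) a \<and> sa_le Pos a (l *\<^sub>R 1)) \<and>
     \<comment> \<open>SA2\<close>
     (\<forall>a\<in>A. a * a \<in> Pos) \<and>
     \<comment> \<open>SA3\<close>
     (\<forall>a\<in>Pos. \<forall>b\<in>Pos. a * b * a \<in> Pos) \<and>
     \<comment> \<open>SA4\<close>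
     (\<forall>a\<in>A. \<forall>b\<in>Pos. a * b * a = 0 \<longrightarrow> a * b = 0 \<and> b * a = 0) \<and>
     \<comment> \<open>SA5\<close>
     (\<forall>a\<in>Pos. \<exists>b\<in>Pos \<inter> bicommutant A a. b * b = a) \<and>
     \<comment> \<open>SA6\<close>
     (\<forall>a\<in>A. \<exists>p\<in>A. p * p = p \<and> (\<forall>b\<in>A. a * b = 0 \<longleftrightarrow> p * b = 0)) \<and>
     \<comment> \<open>SA7\<close>
     (\<forall>a\<in>A. sa_le Pos 1 a \<longrightarrow> (\<exists>b\<in>A. a * b = 1 \<and> b * a = 1)) \<and>
     \<comment> \<open>SA8\<close>
     (\<forall>a\<in>A. \<forall>b\<in>A. \<forall>s::nat \<Rightarrow> 'a.
        (\<forall>n. s n \<in> commutant A b) \<and>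
        (\<forall>n. sa_le Pos (s n) (s (Suc n))) \<and>
        (\<forall>m n. s m * s n = s n * s m) \<and>
        (\<lambda>n. order_unit_norm Pos (a - s n)) \<longlonglongrightarrow> 0
        \<longrightarrow> a \<in> commutant A b)"

definition projections :: "'a::real_algebra_1 set \<Rightarrow> 'a set" where
  "projections A = {p \<in> A. p * p = p}"

definition pmeet :: "'a::real_algebra_1 set \<Rightarrow> 'a set \<Rightarrow> 'a \<Rightarrow> 'a \<Rightarrow> 'a" where
  "pmeet A Pos p q = (THE r. r \<in> projections A \<and> sa_le Pos r p \<and> sa_le Pos r q \<and>
     (\<forall>s\<in>projections A. sa_le Pos s p \<and> sa_le Pos s q \<longrightarrow> sa_le Pos s r))"

definition pjoin :: "'a::real_algebra_1 set \<Rightarrow> 'a set \<Rightarrow> 'a \<Rightarrow> 'a \<Rightarrow> 'a" where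
  "pjoin A Pos p q = (THE r. r \<in> projections A \<and> sa_le Pos p r \<and> sa_le Pos q r \<and>
     (\<forall>s\<in>projections A. sa_le Pos p s \<and> sa_le Pos q s \<longrightarrow> sa_le Pos r s))"

definition pperp :: "'a::real_algebra_1 \<Rightarrow> 'a" where
  "pperp p = 1 - p"

end

theory Submission
  imports Defs
begin

locale sa =
  fixes A Pos :: "'a::real_algebra_1 set"
  assumes SA: "synaptic_algebra A Pos"
begin

lemma SAc: "(0 \<in> A \<and> 1 \<in> A \<and> (\<forall>a\<in>A. \<forall>b\<in>A. a + b \<in> A) \<and> (\<forall>c::real. \<forall>a\<in>A. c *\<^sub>R a \<in> A)) \<and>
     Pos \<subseteq> A \<and>
     (\<forall>a\<in>Pos. - a \<in> Pos \<longrightarrow> a = 0) \<and>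
     (\<forall>a\<in>A. a * a \<in> Pos) \<and>
     (\<forall>a\<in>Pos. \<forall>b\<in>Pos. a * b * a \<in> Pos) \<and>
     (\<forall>a\<in>A. \<forall>b\<in>Pos. a * b * a = 0 \<longrightarrow> a * b = 0 \<and> b * a = 0) \<and>
     (\<forall>a\<in>A. \<exists>p\<in>A. p * p = p \<and> (\<forall>b\<in>A. a * b = 0 \<longleftrightarrow> p * b = 0))"
  using SA unfolding synaptic_algebra_def by (elim conjE) (intro conjI; assumption)

lemma A0: "0 \<in> A" using SAc by simp
lemma A1: "1 \<in> A" using SAc by simp
lemma Aadd: "a \<in> A \<Longrightarrow> b \<in> A \<Longrightarrow> a + b \<in> A" using SAc by simp
lemma Ascale: "a \<in> A \<Longrightarrow> c *\<^sub>R a \<in> A" using SAc by simp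
lemma PosA: "Pos \<subseteq> A" using SAc by simp
lemma Posanti: "a \<in> Pos \<Longrightarrow> - a \<in> Pos \<Longrightarrow> a = 0" using SAc by simp
lemma Possq: "a \<in> A \<Longrightarrow> a * a \<in> Pos" using SAc by simp
lemma SA3: "a \<in> Pos \<Longrightarrow> b \<in> Pos \<Longrightarrow> a * b * a \<in> Pos" using SAc by simp
lemma SA4: "a \<in> A \<Longrightarrow> b \<in> Pos \<Longrightarrow> a * b * a = 0 \<Longrightarrow> a * b = 0 \<and> b * a = 0" using SAc by simp
lemma SA6: "a \<in> A \<Longrightarrow> \<exists>p\<in>A. p * p = p \<and> (\<forall>b\<in>A. a * b = 0 \<longleftrightarrow> p * b = 0)" using SAc by simp

lemma Aneg: "a \<in> A \<Longrightarrow> - a \<in> A"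
  using Ascale[of a "-1"] by simp

lemma Asub: "a \<in> A \<Longrightarrow> b \<in> A \<Longrightarrow> a - b \<in> A"
  using Aadd[of a "-b"] Aneg[of b] by simp

lemma Pos1: "1 \<in> Pos" using Possq[OF A1] by simp

lemma sa_antisym: "sa_le Pos a b \<Longrightarrow> sa_le Pos b a \<Longrightarrow> a = b"
  unfolding sa_le_def using Posanti[of "b - a"] by simp

lemma projD: "e \<in> projections A \<Longrightarrow> e \<in> A \<and> e * e = e"
  by (simp add: projections_def)

lemma projI: "e \<in> A \<Longrightarrow> e * e = e \<Longrightarrow> e \<in> projections A"
  by (simp add: projections_def)

lemma proj_Pos: "e \<in> projections A \<Longrightarrow> e \<in> Pos"
  using projD[of e] Possq[of e] by auto

lemma proj_compl: "e \<in> projections A \<Longrightarrow> 1 - e \<in> projections A"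
  using projD[of e] Asub[OF A1, of e] by (intro projI) (auto simp: algebra_simps)

lemma sqzero: "a \<in> A \<Longrightarrow> a * a = 0 \<Longrightarrow> a = 0"
  using SA4[of a 1] Pos1 by simp

lemma rl: assumes e: "e \<in> projections A" and f: "f \<in> projections A" and ef: "e * f = e"
  shows "f * e = e"
proof -
  have eA: "e \<in> A" and ee: "e * e = e" using projD[OF e] by auto
  have fA: "f \<in> A" and ff: "f * f = f" using projD[OF f] by auto
  have ee': "\<And>x. e * (e * x) = e * x" by (metis ee mult.assoc)
  have ff': "\<And>x. f * (f * x) = f * x" by (metis ff mult.assoc)
  have ef': "\<And>x. e * (f * x) = e * x" by (metis ef mult.assoc)
  define d where "d = f - e"
  have dA: "d \<in> A" using Asub[OF fA eA] d_def by simp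
  have dd: "d * d = f - f * e" unfolding d_def by (simp add: algebra_simps ee ff ef)
  have feA: "f * e \<in> A" using Asub[OF fA, of "d*d"] Possq[OF dA] PosA dd by auto
  define z where "z = f * e - e"
  have zA: "z \<in> A" using Asub[OF feA eA] z_def by simp
  have "z * z = 0" unfolding z_def by (simp add: algebra_simps ee ff ef ee' ff' ef')
  with sqzero[OF zA] show ?thesis by (simp add: z_def)
qed

lemma lr: assumes e: "e \<in> projections A" and f: "f \<in> projections A" and fe: "f * e = e"
  shows "e * f = e"
proof -
  have eA: "e \<in> A" and ee: "e * e = e" using projD[OF e] by auto
  have fA: "f \<in> A" and ff: "f * f = f" using projD[OF f] by auto
  have ee': "\<And>x. e * (e * x) = e * x" by (metis ee mult.assoc)
  have ff': "\<And>x. f * (f * x) = f * x" by (metis ff mult.assoc)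
  have fe': "\<And>x. f * (e * x) = e * x" by (metis fe mult.assoc)
  define d where "d = f - e"
  have dA: "d \<in> A" using Asub[OF fA eA] d_def by simp
  have dd: "d * d = f - e * f" unfolding d_def by (simp add: algebra_simps ee ff fe)
  have efA: "e * f \<in> A" using Asub[OF fA, of "d*d"] Possq[OF dA] PosA dd by auto
  define z where "z = e * f - e"
  have zA: "z \<in> A" using Asub[OF efA eA] z_def by simp
  have "z * z = 0" unfolding z_def by (simp add: algebra_simps ee ff fe ee' ff' fe')
  with sqzero[OF zA] show ?thesis by (simp add: z_def)
qed

lemma le_imp: assumes e: "e \<in> projections A" and f: "f \<in> projections A" and le: "sa_le Pos e f"
  shows "e * f = e"
proof -
  have eA: "e \<in> A" and ee: "e * e = e" using projD[OF e] by auto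
  have fA: "f \<in> A" and ff: "f * f = f" using projD[OF f] by auto
  define g where "g = 1 - f"
  have g: "g \<in> projections A" using proj_compl[OF f] g_def by simp
  have gA: "g \<in> A" using projD[OF g] by simp
  have gP: "g \<in> Pos" using proj_Pos[OF g] .
  have gf: "g * f = 0" unfolding g_def by (simp add: algebra_simps ff)
  have "g * (f - e) * g \<in> Pos" using SA3[OF gP, of "f - e"] le unfolding sa_le_def by simp
  moreover have "g * (f - e) * g = - (g * e * g)" by (simp add: algebra_simps gf)
  ultimately have "- (g * e * g) \<in> Pos" by simp
  moreover have "g * e * g \<in> Pos" using SA3[OF gP proj_Pos[OF e]] .
  ultimately have "g * e * g = 0" using Posanti by blast
  then have "g * e = 0" using SA4[OF gA proj_Pos[OF e]] by blast
  then have "f * e = e" unfolding g_def by (simp add: algebra_simps)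
  then show ?thesis using lr[OF e f] by simp
qed

lemma mult_imp_le: assumes e: "e \<in> projections A" and f: "f \<in> projections A" and ef: "e * f = e"
  shows "sa_le Pos e f"
proof -
  have eA: "e \<in> A" and ee: "e * e = e" using projD[OF e] by auto
  have fA: "f \<in> A" and ff: "f * f = f" using projD[OF f] by auto
  have fe: "f * e = e" using rl[OF e f ef] .
  have "(f - e) * (f - e) = f - e" by (simp add: algebra_simps ee ff ef fe)
  then show ?thesis unfolding sa_le_def using Possq[OF Asub[OF fA eA]] by simp
qed

lemma le_iff: "e \<in> projections A \<Longrightarrow> f \<in> projections A \<Longrightarrow> sa_le Pos e f \<longleftrightarrow> e * f = e"
  using le_imp mult_imp_le by blast

lemma mtrans: "x * y = x \<Longrightarrow> y * z = y \<Longrightarrow> x * z = (x::'a)"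
  by (metis mult.assoc)

lemma join_ex: assumes e: "e \<in> projections A" and f: "f \<in> projections A"
  shows "\<exists>c\<in>projections A. e * c = e \<and> f * c = f \<and>
     (\<forall>s\<in>projections A. e * s = e \<and> f * s = f \<longrightarrow> c * s = c)"
proof -
  have eA: "e \<in> A" and ee: "e * e = e" using projD[OF e] by auto
  have fA: "f \<in> A" and ff: "f * f = f" using projD[OF f] by auto
  obtain c where cA: "c \<in> A" and cc: "c * c = c" and H: "\<forall>b\<in>A. (e + f) * b = 0 \<longleftrightarrow> c * b = 0"
    using SA6[OF Aadd[OF eA fA]] by blast
  have c: "c \<in> projections A" using projI[OF cA cc] .
  define g where "g = 1 - c"
  have g: "g \<in> projections A" using proj_compl[OF c] g_def by simp
  have gA: "g \<in> A" using projD[OF g] by simp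
  have gP: "g \<in> Pos" using proj_Pos[OF g] .
  have "c * g = 0" unfolding g_def by (simp add: algebra_simps cc)
  then have "(e + f) * g = 0" using H gA by blast
  then have "g * ((e + f) * g) = 0" by simp
  then have sum0: "g * e * g + g * f * g = 0" by (simp add: algebra_simps)
  have x: "g * e * g \<in> Pos" using SA3[OF gP proj_Pos[OF e]] .
  have y: "g * f * g \<in> Pos" using SA3[OF gP proj_Pos[OF f]] .
  have "- (g * e * g) = g * f * g" using sum0 by (metis add.commute add_eq_0_iff)
  then have x0: "g * e * g = 0" using Posanti[OF x] y by simp
  then have y0: "g * f * g = 0" using sum0 by simp
  have "g * e = 0" using SA4[OF gA proj_Pos[OF e] x0] by blast
  then have "c * e = e" unfolding g_def by (simp add: algebra_simps)
  then have ec: "e * c = e" using lr[OF e c] by simp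
  have "g * f = 0" using SA4[OF gA proj_Pos[OF f] y0] by blast
  then have "c * f = f" unfolding g_def by (simp add: algebra_simps)
  then have fc: "f * c = f" using lr[OF f c] by simp
  have least: "c * s = c" if s: "s \<in> projections A" and es: "e * s = e" and fs: "f * s = f" for s
  proof -
    have sA: "s \<in> A" using projD[OF s] by simp
    have "(e + f) * (1 - s) = 0" by (simp add: algebra_simps es fs)
    then have "c * (1 - s) = 0" using H Asub[OF A1 sA] by blast
    then show ?thesis by (simp add: algebra_simps)
  qed
  show ?thesis using c ec fc least by blast
qed

lemma join_eq: assumes e: "e \<in> projections A" and f: "f \<in> projections A"
  and c: "c \<in> projections A" and ec: "e * c = e" and fc: "f * c = f"
  and least: "\<forall>s\<in>projections A. e * s = e \<and> f * s = f \<longrightarrow> c * s = c"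
  shows "pjoin A Pos e f = c"
  unfolding pjoin_def
proof (rule the_equality)
  show "c \<in> projections A \<and> sa_le Pos e c \<and> sa_le Pos f c \<and>
    (\<forall>s\<in>projections A. sa_le Pos e s \<and> sa_le Pos f s \<longrightarrow> sa_le Pos c s)"
    using c ec fc least le_iff[OF e] le_iff[OF f] le_iff[OF c] by blast
  fix r assume r: "r \<in> projections A \<and> sa_le Pos e r \<and> sa_le Pos f r \<and>
    (\<forall>s\<in>projections A. sa_le Pos e s \<and> sa_le Pos f s \<longrightarrow> sa_le Pos r s)"
  have "sa_le Pos r c" using r c ec fc le_iff[OF e c] le_iff[OF f c] by blast
  moreover have "sa_le Pos c r" using r least le_iff[OF e] le_iff[OF f] le_iff[OF c] by blast
  ultimately show "r = c" using sa_antisym by blast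
qed

lemma join_props: assumes e: "e \<in> projections A" and f: "f \<in> projections A"
  shows "pjoin A Pos e f \<in> projections A \<and> e * pjoin A Pos e f = e \<and> f * pjoin A Pos e f = f \<and>
     (\<forall>s\<in>projections A. e * s = e \<and> f * s = f \<longrightarrow> pjoin A Pos e f * s = pjoin A Pos e f)"
  using join_ex[OF e f] join_eq[OF e f] by metis

lemma compl_le: assumes s: "s \<in> projections A" and e: "e \<in> projections A" and se: "s * e = s"
  shows "(1 - e) * (1 - s) = 1 - e"
proof -
  have "e * s = s" using rl[OF s e se] .
  then show ?thesis by (simp add: algebra_simps)
qed

lemma compl_le': assumes s: "s \<in> projections A" and e: "e \<in> projections A"
  and h: "(1 - e) * (1 - s) = 1 - e"
  shows "s * e = s"
proof -
  have "e * s = s" using h by (simp add: algebra_simps)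
  then show ?thesis using lr[OF s e] by simp
qed

lemma meet_eq: assumes e: "e \<in> projections A" and f: "f \<in> projections A"
  and c: "c \<in> projections A" and ce: "c * e = c" and cf: "c * f = c"
  and greatest: "\<forall>s\<in>projections A. s * e = s \<and> s * f = s \<longrightarrow> s * c = s"
  shows "pmeet A Pos e f = c"
  unfolding pmeet_def
proof (rule the_equality)
  show "c \<in> projections A \<and> sa_le Pos c e \<and> sa_le Pos c f \<and>
    (\<forall>s\<in>projections A. sa_le Pos s e \<and> sa_le Pos s f \<longrightarrow> sa_le Pos s c)"
    using c ce cf greatest le_iff[OF _ e] le_iff[OF _ f] le_iff[OF _ c] by blast
  fix r assume r: "r \<in> projections A \<and> sa_le Pos r e \<and> sa_le Pos r f \<and>
    (\<forall>s\<in>projections A. sa_le Pos s e \<and> sa_le Pos s f \<longrightarrow> sa_le Pos s r)"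
  have "sa_le Pos c r" using r c ce cf le_iff[OF c e] le_iff[OF c f] by blast
  moreover have "sa_le Pos r c" using r greatest le_iff[OF _ e] le_iff[OF _ f] le_iff[OF _ c] by blast
  ultimately show "r = c" using sa_antisym by blast
qed

lemma meet_props: assumes e: "e \<in> projections A" and f: "f \<in> projections A"
  shows "pmeet A Pos e f \<in> projections A \<and> pmeet A Pos e f * e = pmeet A Pos e f
     \<and> pmeet A Pos e f * f = pmeet A Pos e f \<and>
     (\<forall>s\<in>projections A. s * e = s \<and> s * f = s \<longrightarrow> s * pmeet A Pos e f = s)"
proof -
  have e': "1 - e \<in> projections A" and f': "1 - f \<in> projections A"
    using proj_compl e f by auto
  define j where "j = pjoin A Pos (1 - e) (1 - f)"
  have j: "j \<in> projections A" and ej: "(1 - e) * j = 1 - e" and fj: "(1 - f) * j = 1 - f"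
    and jl: "\<forall>s\<in>projections A. (1 - e) * s = 1 - e \<and> (1 - f) * s = 1 - f \<longrightarrow> j * s = j"
    using join_props[OF e' f'] j_def by auto
  define c where "c = 1 - j"
  have c: "c \<in> projections A" using proj_compl[OF j] c_def by simp
  have ce: "c * e = c" using compl_le'[OF c e] ej c_def by simp
  have cf: "c * f = c" using compl_le'[OF c f] fj c_def by simp
  have gr: "s * c = s" if s: "s \<in> projections A" and se: "s * e = s" and sf: "s * f = s" for s
  proof -
    have "j * (1 - s) = j" using jl compl_le[OF s e se] compl_le[OF s f sf] proj_compl[OF s] by blast
    then have "(1 - (1 - s)) * (1 - j) = 1 - (1 - s)"
      using compl_le[OF j proj_compl[OF s]] by blast
    then show ?thesis using c_def by simp
  qed
  have "pmeet A Pos e f = c" using meet_eq[OF e f c ce cf] gr by blast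
  then show ?thesis using c ce cf gr by simp
qed

lemma comm_prod: assumes e: "e \<in> projections A" and f: "f \<in> projections A" and ef: "e * f = f * e"
  shows "e * f \<in> projections A"
proof -
  have eA: "e \<in> A" and ee: "e * e = e" using projD[OF e] by auto
  have fA: "f \<in> A" and ff: "f * f = f" using projD[OF f] by auto
  have "(e + f) * (e + f) - e - f = e * f + e * f" by (simp add: algebra_simps ee ff ef)
  then have "e * f + e * f \<in> A"
    using Asub[OF Asub[OF PosA[THEN subsetD, OF Possq[OF Aadd[OF eA fA]]] eA] fA] by simp
  then have "(1/2::real) *\<^sub>R (e * f + e * f) \<in> A" by (rule Ascale)
  moreover have "(1/2::real) *\<^sub>R (e * f + e * f) = e * f"
    by (simp add: scaleR_2[symmetric])
  ultimately have efA: "e * f \<in> A" by simp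
  have "e * f * (e * f) = e * f" by (metis ef ee ff mult.assoc)
  then show ?thesis using projI[OF efA] by simp
qed

lemma meet_comm: assumes e: "e \<in> projections A" and f: "f \<in> projections A" and ef: "e * f = f * e"
  shows "pmeet A Pos e f = e * f"
proof -
  have ee: "e * e = e" using projD[OF e] by auto
  have ff: "f * f = f" using projD[OF f] by auto
  show ?thesis
  proof (rule meet_eq[OF e f comm_prod[OF e f ef]])
    show "e * f * e = e * f" by (metis ef ee mult.assoc)
    show "e * f * f = e * f" by (metis ff mult.assoc)
    show "\<forall>s\<in>projections A. s * e = s \<and> s * f = s \<longrightarrow> s * (e * f) = s"
      by (metis mult.assoc)
  qed
qed


lemma comm_join: assumes p: "p \<in> projections A" and e: "e \<in> projections A" and f: "f \<in> projections A"
  and pe: "p * e = e * p" and pf: "p * f = f * p"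
  shows "p * pjoin A Pos e f = pjoin A Pos e f * p"
proof -
  have p': "1 - p \<in> projections A" using proj_compl[OF p] .
  have pp: "p * p = p" using projD[OF p] by simp
  have pe': "(1 - p) * e = e * (1 - p)" using pe by (simp add: algebra_simps)
  have pf': "(1 - p) * f = f * (1 - p)" using pf by (simp add: algebra_simps)
  have a1: "p * e \<in> projections A" using comm_prod[OF p e pe] .
  have b1: "p * f \<in> projections A" using comm_prod[OF p f pf] .
  have a2: "(1 - p) * e \<in> projections A" using comm_prod[OF p' e pe'] .
  have b2: "(1 - p) * f \<in> projections A" using comm_prod[OF p' f pf'] .
  define c1 where "c1 = pjoin A Pos (p * e) (p * f)"
  define c2 where "c2 = pjoin A Pos ((1 - p) * e) ((1 - p) * f)"
  have c1: "c1 \<in> projections A" and ec1: "p * e * c1 = p * e" and fc1: "p * f * c1 = p * f"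
    and l1: "\<forall>s\<in>projections A. p * e * s = p * e \<and> p * f * s = p * f \<longrightarrow> c1 * s = c1"
    using join_props[OF a1 b1] c1_def by auto
  have c2: "c2 \<in> projections A" and ec2: "(1 - p) * e * c2 = (1 - p) * e"
    and fc2: "(1 - p) * f * c2 = (1 - p) * f"
    and l2: "\<forall>s\<in>projections A. (1 - p) * e * s = (1 - p) * e \<and> (1 - p) * f * s = (1 - p) * f \<longrightarrow> c2 * s = c2"
    using join_props[OF a2 b2] c2_def by auto
  have "p * e * p = p * e" by (metis pe pp mult.assoc)
  moreover have "p * f * p = p * f" by (metis pf pp mult.assoc)
  ultimately have c1p: "c1 * p = c1" using l1 p by blast
  have p1p: "(1 - p) * (1 - p) = 1 - p" using projD[OF p'] by simp
  have "(1 - p) * e * (1 - p) = (1 - p) * e" by (metis pe' p1p mult.assoc)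
  moreover have "(1 - p) * f * (1 - p) = (1 - p) * f" by (metis pf' p1p mult.assoc)
  ultimately have c2p: "c2 * (1 - p) = c2" using l2 p' by blast
  have pc1: "p * c1 = c1" using rl[OF c1 p c1p] .
  have pc2': "(1 - p) * c2 = c2" using rl[OF c2 p' c2p] .
  have c2p0: "c2 * p = 0" using c2p by (simp add: algebra_simps)
  have pc20: "p * c2 = 0" using pc2' by (simp add: algebra_simps)
  have c1c2: "c1 * c2 = 0" by (metis c1p pc20 mult.assoc mult_zero_right)
  have c2c1: "c2 * c1 = 0" by (metis pc1 c2p0 mult.assoc mult_zero_left)
  have c1c1: "c1 * c1 = c1" and c2c2: "c2 * c2 = c2" using projD c1 c2 by auto
  define s where "s = c1 + c2"
  have sA: "s \<in> A" using Aadd projD c1 c2 s_def by auto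
  have "s * s = s" unfolding s_def by (simp add: algebra_simps c1c2 c2c1 c1c1 c2c2)
  then have sP: "s \<in> projections A" using projI[OF sA] by simp
  have bnd: "x * s = x" if x: "x \<in> projections A" and px: "p * x = x * p"
     and xc1: "p * x * c1 = p * x" and xc2: "(1 - p) * x * c2 = (1 - p) * x" for x
  proof -
    have "x * c1 = p * x * c1" by (metis pc1 px mult.assoc)
    moreover have "x * c2 = (1 - p) * x * c2"
    proof -
      have "x * c2 = x * ((1 - p) * c2)" using pc2' by simp
      also have "\<dots> = (1 - p) * x * c2" using px by (simp add: algebra_simps)
      finally show ?thesis .
    qed
    ultimately have "x * s = p * x + (1 - p) * x" unfolding s_def using xc1 xc2
      by (simp add: distrib_left)
    then show ?thesis by (simp add: algebra_simps)
  qed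
  have es: "e * s = e" using bnd[OF e pe ec1 ec2] .
  have fs: "f * s = f" using bnd[OF f pf fc1 fc2] .
  have least: "\<forall>t\<in>projections A. e * t = e \<and> f * t = f \<longrightarrow> s * t = s"
  proof (intro ballI impI)
    fix t assume t: "t \<in> projections A" and h: "e * t = e \<and> f * t = f"
    have "c1 * t = c1" using l1 t h by (metis mult.assoc)
    moreover have "c2 * t = c2" using l2 t h by (metis mult.assoc)
    ultimately show "s * t = s" unfolding s_def by (simp add: distrib_right)
  qed
  have "pjoin A Pos e f = s" using join_eq[OF e f sP es fs least] .
  moreover have "p * s = s * p" unfolding s_def
    by (simp add: distrib_left distrib_right pc1 pc20 c1p c2p0)
  ultimately show ?thesis by simp
qed

lemma meet_via_join: assumes e: "e \<in> projections A" and f: "f \<in> projections A"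
  shows "pmeet A Pos e f = 1 - pjoin A Pos (1 - e) (1 - f)"
proof -
  have e': "1 - e \<in> projections A" and f': "1 - f \<in> projections A"
    using proj_compl e f by auto
  define j where "j = pjoin A Pos (1 - e) (1 - f)"
  have j: "j \<in> projections A" and ej: "(1 - e) * j = 1 - e" and fj: "(1 - f) * j = 1 - f"
    and jl: "\<forall>s\<in>projections A. (1 - e) * s = 1 - e \<and> (1 - f) * s = 1 - f \<longrightarrow> j * s = j"
    using join_props[OF e' f'] j_def by auto
  define c where "c = 1 - j"
  have c: "c \<in> projections A" using proj_compl[OF j] c_def by simp
  have ce: "c * e = c" using compl_le'[OF c e] ej c_def by simp
  have cf: "c * f = c" using compl_le'[OF c f] fj c_def by simp
  have gr: "s * c = s" if s: "s \<in> projections A" and se: "s * e = s" and sf: "s * f = s" for s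
  proof -
    have "j * (1 - s) = j" using jl compl_le[OF s e se] compl_le[OF s f sf] proj_compl[OF s] by blast
    then have "(1 - (1 - s)) * (1 - j) = 1 - (1 - s)"
      using compl_le[OF j proj_compl[OF s]] by blast
    then show ?thesis using c_def by simp
  qed
  have "pmeet A Pos e f = c" using meet_eq[OF e f c ce cf] gr by blast
  then show ?thesis using c_def j_def by simp
qed

lemma comm_meet: assumes p: "p \<in> projections A" and e: "e \<in> projections A" and f: "f \<in> projections A"
  and pe: "p * e = e * p" and pf: "p * f = f * p"
  shows "p * pmeet A Pos e f = pmeet A Pos e f * p"
proof -
  have "p * (1 - e) = (1 - e) * p" "p * (1 - f) = (1 - f) * p" using pe pf by (simp_all add: algebra_simps)
  then have "p * pjoin A Pos (1 - e) (1 - f) = pjoin A Pos (1 - e) (1 - f) * p"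
    using comm_join[OF p proj_compl[OF e] proj_compl[OF f]] by blast
  then show ?thesis unfolding meet_via_join[OF e f] by (simp add: algebra_simps)
qed

lemma zero_lemma: assumes m: "m \<in> projections A" and a: "a \<in> projections A" and b: "b \<in> projections A"
  and ma: "m * a = m" and mb: "m * b = m" and mj: "m * pjoin A Pos (1 - a) (1 - b) = m"
  shows "m = 0"
proof -
  define j where "j = pjoin A Pos (1 - a) (1 - b)"
  have j: "j \<in> projections A"
    and jl: "\<forall>s\<in>projections A. (1 - a) * s = 1 - a \<and> (1 - b) * s = 1 - b \<longrightarrow> j * s = j"
    using join_props[OF proj_compl[OF a] proj_compl[OF b]] j_def by auto
  have "j * (1 - m) = j" using jl compl_le[OF m a ma] compl_le[OF m b mb] proj_compl[OF m] by blast
  then have "(1 - (1 - m)) * (1 - j) = 1 - (1 - m)"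
    using compl_le[OF j proj_compl[OF m]] by blast
  then have "m * (1 - j) = m" by simp
  moreover have "m * j = m" using mj j_def by simp
  ultimately show ?thesis by (simp add: algebra_simps)
qed

lemma comm_le: "x * y = x \<Longrightarrow> y * x = x \<Longrightarrow> x * y = y * (x::'a)" by simp

lemma comm_compl: "(1 - x) * y = y * (1 - x) \<Longrightarrow> x * y = y * (x::'a)"
  by (simp add: algebra_simps)

end

theorem theorem6p4:
  fixes A Pos :: "'a::real_algebra_1 set" and p q :: 'a
  assumes SA: "synaptic_algebra A Pos"
    and p: "p \<in> projections A" and q: "q \<in> projections A"
  defines "r \<equiv> pmeet A Pos (pmeet A Pos (pmeet A Pos (pjoin A Pos p q) (pjoin A Pos p (pperp q)))
                   (pjoin A Pos (pperp p) q)) (pjoin A Pos (pperp p) (pperp q))"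
    and "rp \<equiv> pmeet A Pos (pmeet A Pos p (pjoin A Pos (pperp p) q)) (pjoin A Pos (pperp p) (pperp q))"
    and "rq \<equiv> pmeet A Pos (pmeet A Pos q (pjoin A Pos p (pperp q))) (pjoin A Pos (pperp p) (pperp q))"
  shows "rp = p * r \<and> rp = r * p \<and> rp = pmeet A Pos r p
     \<and> rq = q * r \<and> rq = r * q \<and> rq = pmeet A Pos r q
     \<and> rp \<in> projections A \<and> sa_le Pos rp r
     \<and> rq \<in> projections A \<and> sa_le Pos rq r
     \<and> pmeet A Pos rp rq = 0
     \<and> pmeet A Pos rp (r - rq) = 0
     \<and> pmeet A Pos (r - rp) rq = 0
     \<and> pmeet A Pos (r - rp) (r - rq) = 0"
proof -
  interpret sa A Pos by (rule sa.intro[OF SA])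
  have p': "1 - p \<in> projections A" and q': "1 - q \<in> projections A" using proj_compl p q by auto
  define j1 where "j1 = pjoin A Pos p q"
  define j2 where "j2 = pjoin A Pos p (1 - q)"
  define j3 where "j3 = pjoin A Pos (1 - p) q"
  define j4 where "j4 = pjoin A Pos (1 - p) (1 - q)"
  have j1: "j1 \<in> projections A" and pj1: "p * j1 = p" and qj1: "q * j1 = q"
    using join_props[OF p q] j1_def by auto
  have j2: "j2 \<in> projections A" and pj2: "p * j2 = p" and qj2: "(1 - q) * j2 = 1 - q"
    using join_props[OF p q'] j2_def by auto
  have j3: "j3 \<in> projections A" and pj3: "(1 - p) * j3 = 1 - p" and qj3: "q * j3 = q"
    using join_props[OF p' q] j3_def by auto
  have j4: "j4 \<in> projections A" and pj4: "(1 - p) * j4 = 1 - p" and qj4: "(1 - q) * j4 = 1 - q"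
    using join_props[OF p' q'] j4_def by auto
  define m12 where "m12 = pmeet A Pos j1 j2"
  define m123 where "m123 = pmeet A Pos m12 j3"
  have m12: "m12 \<in> projections A" and m12a: "m12 * j1 = m12" and m12b: "m12 * j2 = m12"
    and m12g: "\<forall>s\<in>projections A. s * j1 = s \<and> s * j2 = s \<longrightarrow> s * m12 = s"
    using meet_props[OF j1 j2] m12_def by auto
  have m123: "m123 \<in> projections A" and m123a: "m123 * m12 = m123" and m123b: "m123 * j3 = m123"
    and m123g: "\<forall>s\<in>projections A. s * m12 = s \<and> s * j3 = s \<longrightarrow> s * m123 = s"
    using meet_props[OF m12 j3] m123_def by auto
  have r_eq: "r = pmeet A Pos m123 j4"
    unfolding r_def m123_def m12_def j1_def j2_def j3_def j4_def pperp_def ..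
  have r: "r \<in> projections A" and ra: "r * m123 = r" and rb: "r * j4 = r"
    and rg: "\<forall>s\<in>projections A. s * m123 = s \<and> s * j4 = s \<longrightarrow> s * r = s"
    using meet_props[OF m123 j4] r_eq by auto
  have rj1: "r * j1 = r" by (metis mtrans ra m123a m12a)
  have rj2: "r * j2 = r" by (metis mtrans ra m123a m12b)
  have rj3: "r * j3 = r" by (metis mtrans ra m123b)
  have rgen: "s * r = s" if s: "s \<in> projections A" and "s * j1 = s" "s * j2 = s" "s * j3 = s" "s * j4 = s" for s
    using that m12g m123g rg by metis
  have cp1: "p * j1 = j1 * p" using comm_le pj1 rl[OF p j1 pj1] by metis
  have cp2: "p * j2 = j2 * p" using comm_le pj2 rl[OF p j2 pj2] by metis
  have cp3: "p * j3 = j3 * p" using comm_compl comm_le pj3 rl[OF p' j3 pj3] by metis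
  have cp4: "p * j4 = j4 * p" using comm_compl comm_le pj4 rl[OF p' j4 pj4] by metis
  have cq1: "q * j1 = j1 * q" using comm_le qj1 rl[OF q j1 qj1] by metis
  have cq2: "q * j2 = j2 * q" using comm_compl comm_le qj2 rl[OF q' j2 qj2] by metis
  have cq3: "q * j3 = j3 * q" using comm_le qj3 rl[OF q j3 qj3] by metis
  have cq4: "q * j4 = j4 * q" using comm_compl comm_le qj4 rl[OF q' j4 qj4] by metis
  have "p * m12 = m12 * p" using comm_meet[OF p j1 j2 cp1 cp2] m12_def by simp
  then have "p * m123 = m123 * p" using comm_meet[OF p m12 j3 _ cp3] m123_def by simp
  then have cpr: "p * r = r * p" using comm_meet[OF p m123 j4 _ cp4] r_eq by simp
  have "q * m12 = m12 * q" using comm_meet[OF q j1 j2 cq1 cq2] m12_def by simp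
  then have "q * m123 = m123 * q" using comm_meet[OF q m12 j3 _ cq3] m123_def by simp
  then have cqr: "q * r = r * q" using comm_meet[OF q m123 j4 _ cq4] r_eq by simp
  define mp where "mp = pmeet A Pos p j3"
  have mp: "mp \<in> projections A" and mpa: "mp * p = mp" and mpb: "mp * j3 = mp"
    and mpg: "\<forall>s\<in>projections A. s * p = s \<and> s * j3 = s \<longrightarrow> s * mp = s"
    using meet_props[OF p j3] mp_def by auto
  have rp_eq: "rp = pmeet A Pos mp j4"
    unfolding rp_def mp_def j3_def j4_def pperp_def ..
  have rpP: "rp \<in> projections A" and rpa: "rp * mp = rp" and rpb: "rp * j4 = rp"
    and rpg: "\<forall>s\<in>projections A. s * mp = s \<and> s * j4 = s \<longrightarrow> s * rp = s"
    using meet_props[OF mp j4] rp_eq by auto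
  have rpp: "rp * p = rp" by (metis mtrans rpa mpa)
  have rpj3: "rp * j3 = rp" by (metis mtrans rpa mpb)
  have rpr: "rp * r = rp"
    by (rule rgen[OF rpP]) (auto intro: mtrans[OF rpp] pj1 pj2 rpj3 rpb)
  have rp_meet: "pmeet A Pos r p = rp"
  proof (rule meet_eq[OF r p rpP rpr rpp], intro ballI impI)
    fix s assume s: "s \<in> projections A" and h: "s * r = s \<and> s * p = s"
    have "s * j3 = s" by (metis h mtrans rj3)
    then have "s * mp = s" using mpg s h by blast
    moreover have "s * j4 = s" by (metis h mtrans rb)
    ultimately show "s * rp = s" using rpg s by blast
  qed
  have rp_rp: "rp = r * p" using meet_comm[OF r p cpr[symmetric]] rp_meet by simp
  define mq where "mq = pmeet A Pos q j2"
  have mq: "mq \<in> projections A" and mqa: "mq * q = mq" and mqb: "mq * j2 = mq"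
    and mqg: "\<forall>s\<in>projections A. s * q = s \<and> s * j2 = s \<longrightarrow> s * mq = s"
    using meet_props[OF q j2] mq_def by auto
  have rq_eq: "rq = pmeet A Pos mq j4"
    unfolding rq_def mq_def j2_def j4_def pperp_def ..
  have rqP: "rq \<in> projections A" and rqa: "rq * mq = rq" and rqb: "rq * j4 = rq"
    and rqg: "\<forall>s\<in>projections A. s * mq = s \<and> s * j4 = s \<longrightarrow> s * rq = s"
    using meet_props[OF mq j4] rq_eq by auto
  have rqq: "rq * q = rq" by (metis mtrans rqa mqa)
  have rqj2: "rq * j2 = rq" by (metis mtrans rqa mqb)
  have rqr: "rq * r = rq"
    by (rule rgen[OF rqP]) (auto intro: mtrans[OF rqq] qj1 qj3 rqj2 rqb)
  have rq_meet: "pmeet A Pos r q = rq"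
  proof (rule meet_eq[OF r q rqP rqr rqq], intro ballI impI)
    fix s assume s: "s \<in> projections A" and h: "s * r = s \<and> s * q = s"
    have "s * j2 = s" by (metis h mtrans rj2)
    then have "s * mq = s" using mqg s h by blast
    moreover have "s * j4 = s" by (metis h mtrans rb)
    ultimately show "s * rq = s" using rqg s by blast
  qed
  have rq_rq: "rq = r * q" using meet_comm[OF r q cqr[symmetric]] rq_meet by simp
  have "r * (1 - p) = (1 - p) * r" using cpr by (simp add: algebra_simps)
  then have "pmeet A Pos r (1 - p) = r * (1 - p)" using meet_comm[OF r p'] by simp
  then have rmp: "r - rp = pmeet A Pos r (1 - p)" using rp_rp by (simp add: algebra_simps)
  have "r * (1 - q) = (1 - q) * r" using cqr by (simp add: algebra_simps)
  then have "pmeet A Pos r (1 - q) = r * (1 - q)" using meet_comm[OF r q'] by simp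
  then have rmq: "r - rq = pmeet A Pos r (1 - q)" using rq_rq by (simp add: algebra_simps)
  have np: "r - rp \<in> projections A" and np1: "(r - rp) * r = r - rp" and np2: "(r - rp) * (1 - p) = r - rp"
    using meet_props[OF r p'] rmp by auto
  have nq: "r - rq \<in> projections A" and nq1: "(r - rq) * r = r - rq" and nq2: "(r - rq) * (1 - q) = r - rq"
    using meet_props[OF r q'] rmq by auto
  have g1: "pmeet A Pos rp rq = 0"
  proof -
    define m where "m = pmeet A Pos rp rq"
    have m: "m \<in> projections A" and ma: "m * rp = m" and mb: "m * rq = m"
      using meet_props[OF rpP rqP] m_def by auto
    have "m = 0"
      by (rule zero_lemma[OF m p q]) (metis ma mb mtrans rpp rqq rpb j4_def)+
    then show ?thesis using m_def by simp
  qed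
  have g2: "pmeet A Pos rp (r - rq) = 0"
  proof -
    define m where "m = pmeet A Pos rp (r - rq)"
    have m: "m \<in> projections A" and ma: "m * rp = m" and mb: "m * (r - rq) = m"
      using meet_props[OF rpP nq] m_def by auto
    have "m = 0"
      by (rule zero_lemma[OF m p q']) (simp_all, (metis ma mb mtrans rpp nq2 rpr rj3 j3_def)+)
    then show ?thesis using m_def by simp
  qed
  have g3: "pmeet A Pos (r - rp) rq = 0"
  proof -
    define m where "m = pmeet A Pos (r - rp) rq"
    have m: "m \<in> projections A" and ma: "m * (r - rp) = m" and mb: "m * rq = m"
      using meet_props[OF np rqP] m_def by auto
    have "m = 0"
      by (rule zero_lemma[OF m p' q]) (simp_all, (metis ma mb mtrans np2 rqq rqr rj2 j2_def)+)
    then show ?thesis using m_def by simp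
  qed
  have g4: "pmeet A Pos (r - rp) (r - rq) = 0"
  proof -
    define m where "m = pmeet A Pos (r - rp) (r - rq)"
    have m: "m \<in> projections A" and ma: "m * (r - rp) = m" and mb: "m * (r - rq) = m"
      using meet_props[OF np nq] m_def by auto
    have "m = 0"
      by (rule zero_lemma[OF m p' q']) (simp_all, (metis ma mb mtrans np2 nq2 np1 rj1 j1_def)+)
    then show ?thesis using m_def by simp
  qed
  have "sa_le Pos rp r" using le_iff[OF rpP r] rpr by simp
  moreover have "sa_le Pos rq r" using le_iff[OF rqP r] rqr by simp
  ultimately show ?thesis using rp_rp rq_rq cpr cqr rp_meet rq_meet rpP rqP g1 g2 g3 g4 by simp
qed

end
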